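(* Let $n\ge 0$ and let $\delta_B$ be any perfect matching of $\{0,1,\ldots,2n+1\}$. Then the configuration $\delta_B\cup\delta_G$ equals the breakpoint graph $BG(\pi)$ of some signed permutation $\pi$ of $\{1,\dots,n\}$ if and only if the complement configuration $\delta_B\cup\overline{\delta_G}$ is hamiltonian (contains a cycle visiting each of the $2n+2$ vertices exactly once).
   Context: $\delta_G=\{\{2i,2i+1\}:0\le i\le n\}$ and $\overline{\delta_G}=\{\{2i-1,2i\}:1\le i\le n\}\cup\{\{0,2n+1\}\}$; a configuration is a multigraph on $\{0,\dots,2n+1\}$ that is the union of a perfect matching $\delta_B$ with $\delta_G$, and its complement replaces $\delta_G$ by $\overline{\delta_G}$. The breakpoint graph: for a signed permutation $\pi$ of $\{1,\dots,n\}$, let $\pi'$ be the unsigned permutation of $\{1,\dots,2n\}$ obtained by replacing each $\pi_i>0$ by $(2\pi_i-1,2\pi_i)$ and each $\pi_i<0$ by $(2|\pi_i|,2|\pi_i|-1)$, with $\pi'_0=0$, $\pi'_{2n+1}=2n+1$; $BG(\pi)$ is the multigraph on $\{0,\dots,2n+1\}$ with black edges $\{\{\pi'_{2i},\pi'_{2i+1}\}:0\le i\le n\}$ and grey edges $\delta_G$. *)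

theory Defs
  imports Main "HOL-Library.Multiset"
begin

definition verts :: "nat \<Rightarrow> nat set" where
  "verts n = {0..2*n+1}"

text \<open>Edges are 2-element vertex sets; multigraphs are multisets of edges.\<close>
definition perfect_matching :: "nat set \<Rightarrow> nat set set \<Rightarrow> bool" where
  "perfect_matching V M \<longleftrightarrow>
     (\<forall>e\<in>M. e \<subseteq> V \<and> card e = 2) \<and> (\<forall>v\<in>V. \<exists>!e. e \<in> M \<and> v \<in> e)"

definition grey_edges :: "nat \<Rightarrow> nat set set" where
  "grey_edges n = {{2*i, 2*i+1} | i. i \<le> n}"

definition grey_edges_compl :: "nat \<Rightarrow> nat set set" where
  "grey_edges_compl n = {{2*i - 1, 2*i} | i. 1 \<le> i \<and> i \<le> n} \<union> {{0, 2*n+1}}"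

definition configuration :: "nat set set \<Rightarrow> nat \<Rightarrow> nat set multiset" where
  "configuration dB n = mset_set dB + mset_set (grey_edges n)"

definition compl_configuration :: "nat set set \<Rightarrow> nat \<Rightarrow> nat set multiset" where
  "compl_configuration dB n = mset_set dB + mset_set (grey_edges_compl n)"

definition signed_perm :: "nat \<Rightarrow> int list \<Rightarrow> bool" where
  "signed_perm n p \<longleftrightarrow> length p = n \<and> distinct (map abs p) \<and> set (map abs p) = {1..int n}"

text \<open>The unsigned permutation pi' extended by pi'_0 = 0 and pi'_{2n+1} = 2n+1.\<close>
definition unsigned_ext :: "int list \<Rightarrow> nat list" where
  "unsigned_ext p = [0] @ concat (map (\<lambda>x. if x > 0 then [2 * nat x - 1, 2 * nat x]
                                             else [2 * nat \<bar>x\<bar>, 2 * nat \<bar>x\<bar> - 1]) p)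
                    @ [2 * length p + 1]"

definition black_edges :: "int list \<Rightarrow> nat set multiset" where
  "black_edges p = (let q = unsigned_ext p in
     mset (map (\<lambda>i. {q ! (2*i), q ! (2*i+1)}) [0..<length p + 1]))"

definition breakpoint_graph :: "int list \<Rightarrow> nat set multiset" where
  "breakpoint_graph p = black_edges p + mset_set (grey_edges (length p))"

text \<open>Hamiltonian cycle in a multigraph G on vertex set V: a cyclic ordering of all vertices
  such that the consecutive edges (as a multiset, so parallel edges may form a 2-cycle)
  are contained in G.\<close>
definition hamiltonian :: "nat set \<Rightarrow> nat set multiset \<Rightarrow> bool" where
  "hamiltonian V G \<longleftrightarrow> (\<exists>vs. distinct vs \<and> set vs = V \<and>
     mset (map (\<lambda>i. {vs ! i, vs ! ((i + 1) mod length vs)}) [0..<length vs]) \<subseteq># G)"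

end

theory Submission
  imports Defs
begin



definition cedges :: "nat list \<Rightarrow> nat set multiset" where
  "cedges vs = mset (map (\<lambda>i. {vs ! i, vs ! ((i + 1) mod length vs)}) [0..<length vs])"

lemma hamiltonian_cedges: "hamiltonian V G \<longleftrightarrow> (\<exists>vs. distinct vs \<and> set vs = V \<and> cedges vs \<subseteq># G)"
  unfolding hamiltonian_def cedges_def by simp

definition hh :: "nat \<times> nat \<Rightarrow> nat set" where "hh = (\<lambda>(a,b). {a,b})"

lemma cedges_Cons: "cedges (x#ys) = mset (map hh (zip (x#ys) (ys@[x])))"
proof -
  have "map (\<lambda>i. {(x#ys) ! i, (x#ys) ! ((i + 1) mod length (x#ys))}) [0..<length (x#ys)]
      = map hh (zip (x#ys) (ys@[x]))"
  proof (rule nth_equalityI)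
    fix i assume "i < length (map (\<lambda>i. {(x#ys) ! i, (x#ys) ! ((i + 1) mod length (x#ys))}) [0..<length (x#ys)])"
    hence i: "i < Suc (length ys)" by simp
    show "map (\<lambda>i. {(x#ys) ! i, (x#ys) ! ((i + 1) mod length (x#ys))}) [0..<length (x#ys)] ! i
      = map hh (zip (x#ys) (ys@[x])) ! i"
    proof (cases "i < length ys")
      case True
      then show ?thesis using i by (simp add: hh_def nth_append)
    next
      case False
      then have "i = length ys" using i by simp
      then show ?thesis by (simp add: hh_def nth_append)
    qed
  qed simp
  then show ?thesis unfolding cedges_def by simp
qed

lemma cedges_rotate1: "cedges (rotate1 xs) = cedges xs"
proof (cases xs)
  case Nil then show ?thesis by simp
next
  case (Cons x ys)
  show ?thesis
  proof (cases ys)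
    case Nil then show ?thesis using Cons by simp
  next
    case (Cons y zs)
    have "zip ((y#zs) @ [x]) ((zs@[x]) @ [y]) = zip (y#zs) (zs@[x]) @ zip [x] [y]"
      by (rule zip_append) simp
    then show ?thesis using Cons \<open>xs = x#ys\<close>
      by (simp add: cedges_Cons hh_def insert_commute)
  qed
qed

lemma cedges_rotate: "cedges (rotate k xs) = cedges xs"
  by (induction k) (simp_all add: cedges_rotate1)

lemma cedges_alt: assumes "xs \<noteq> []"
  shows "cedges xs = mset (map hh (zip (butlast xs) (tl xs))) + {#{last xs, hd xs}#}"
proof -
  obtain x ys where xs: "xs = x # ys" using assms by (cases xs) auto
  have "x#ys = butlast (x#ys) @ [last (x#ys)]" by simp
  then have "zip (x#ys) (ys@[x]) = zip (butlast (x#ys) @ [last (x#ys)]) (ys@[x])" by simp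
  also have "\<dots> = zip (butlast (x#ys)) ys @ zip [last (x#ys)] [x]"
    by (rule zip_append) simp
  finally show ?thesis using xs by (simp add: cedges_Cons hh_def)
qed

lemma map_hh_zip_comm: "map hh (zip a b) = map hh (zip b a)"
  by (subst zip_commute) (auto simp: hh_def insert_commute)

lemma tl_rev': "tl (rev xs) = rev (butlast xs)"
  by (induction xs) (auto simp: butlast_append)

lemma cedges_rev: "cedges (rev xs) = cedges xs"
proof (cases "xs = []")
  case True then show ?thesis by simp
next
  case False
  have z: "zip (rev (tl xs)) (rev (butlast xs)) = rev (zip (tl xs) (butlast xs))"
    by (rule zip_rev) simp
  have "cedges (rev xs) = mset (map hh (zip (rev (tl xs)) (rev (butlast xs)))) + {#{hd xs, last xs}#}"
    using False by (simp add: cedges_alt hd_rev last_rev tl_rev')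
  also have "\<dots> = mset (map hh (zip (tl xs) (butlast xs))) + {#{last xs, hd xs}#}"
    unfolding z by (simp add: insert_commute flip: rev_map)
  also have "\<dots> = cedges xs" using False by (simp add: cedges_alt map_hh_zip_comm[of "tl xs"])
  finally show ?thesis .
qed



definition gg :: "int \<Rightarrow> nat list" where
  "gg x = (if x > 0 then [2 * nat x - 1, 2 * nat x] else [2 * nat \<bar>x\<bar>, 2 * nat \<bar>x\<bar> - 1])"

lemma unsigned_ext_gg: "unsigned_ext p = 0 # concat (map gg p) @ [2 * length p + 1]"
  unfolding unsigned_ext_def gg_def by simp

lemma len_concat_gg: "length (concat (map gg p)) = 2 * length p"
  by (induction p) (auto simp: gg_def)

lemma concat_gg_nth: "j < length p \<Longrightarrow> concat (map gg p) ! (2*j) = gg (p!j) ! 0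
   \<and> concat (map gg p) ! (2*j+1) = gg (p!j) ! 1"
proof (induction p arbitrary: j)
  case Nil then show ?case by simp
next
  case (Cons a p)
  have l: "length (gg a) = 2" by (simp add: gg_def)
  show ?case
  proof (cases j)
    case 0 then show ?thesis using l by (simp add: nth_append)
  next
    case (Suc k)
    then have "k < length p" using Cons by simp
    then show ?thesis using Cons.IH[of k] l Suc by (simp add: nth_append)
  qed
qed

lemma set_gg: "x \<noteq> 0 \<Longrightarrow> set (gg x) = {2 * nat \<bar>x\<bar> - 1, 2 * nat \<bar>x\<bar>}"
  by (auto simp: gg_def)

lemma q_nth:
  assumes "j < length p"
  shows "unsigned_ext p ! (2*j+1) = gg (p!j) ! 0" "unsigned_ext p ! (2*j+2) = gg (p!j) ! 1"
proof -
  have a: "2*j+1 < length (concat (map gg p))" "2*j < length (concat (map gg p))"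
    using assms by (simp_all add: len_concat_gg)
  show "unsigned_ext p ! (2*j+1) = gg (p!j) ! 0"
    using concat_gg_nth[OF assms] a by (simp add: unsigned_ext_gg nth_append)
  have "unsigned_ext p ! (2*j+2) = (0 # concat (map gg p) @ [2 * length p + 1]) ! Suc (2*j+1)"
    by (simp add: unsigned_ext_gg)
  then show "unsigned_ext p ! (2*j+2) = gg (p!j) ! 1"
    using concat_gg_nth[OF assms] a by (simp add: nth_append)
qed

lemma q_len: "length (unsigned_ext p) = 2 * length p + 2"
  by (simp add: unsigned_ext_gg len_concat_gg)

lemma q_first: "unsigned_ext p ! 0 = 0" by (simp add: unsigned_ext_gg)
lemma q_last: "unsigned_ext p ! (2 * length p + 1) = 2 * length p + 1"
  by (simp add: unsigned_ext_gg nth_append len_concat_gg)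

lemma split_even_odd: "mset (map f [0..<2*m]) = mset (map (\<lambda>j. f (2*j)) [0..<m]) + mset (map (\<lambda>j. f (2*j+1)) [0..<m])"
proof (induction m)
  case 0 then show ?case by simp
next
  case (Suc m)
  have "[0..<2*Suc m] = [0..<2*m] @ [2*m, 2*m+1]"
    by simp
  then show ?case using Suc by simp
qed



lemma sp_facts:
  assumes "signed_perm n p"
  shows "length p = n" "(\<lambda>x. nat \<bar>x\<bar>) ` set p = {1..n}" "\<And>x. x \<in> set p \<Longrightarrow> 1 \<le> nat \<bar>x\<bar> \<and> nat \<bar>x\<bar> \<le> n"
    "distinct (map (\<lambda>x. nat \<bar>x\<bar>) p)"
proof -
  have s: "abs ` set p = {1..int n}" and d: "distinct (map abs p)"
    using assms by (auto simp: signed_perm_def)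
  show "length p = n" using assms by (simp add: signed_perm_def)
  have "(\<lambda>x. nat \<bar>x\<bar>) ` set p = nat ` abs ` set p" by (simp add: image_image)
  also have "\<dots> = {1..n}" unfolding s
  proof (intro equalityI subsetI)
    fix k assume "k \<in> nat ` {1..int n}" then show "k \<in> {1..n}" by auto
  next
    fix k assume "k \<in> {1..n}" then have "int k \<in> {1..int n}" by auto
    then show "k \<in> nat ` {1..int n}" by (metis image_eqI nat_int)
  qed
  finally show "(\<lambda>x. nat \<bar>x\<bar>) ` set p = {1..n}" .
  then show "\<And>x. x \<in> set p \<Longrightarrow> 1 \<le> nat \<bar>x\<bar> \<and> nat \<bar>x\<bar> \<le> n" by auto
  have "map (\<lambda>x. nat \<bar>x\<bar>) p = map nat (map abs p)" by simp
  have inj: "inj_on nat (set (map abs p))" by (rule inj_onI) auto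
  have dd: "distinct (map nat (map abs p))" using distinct_map[of nat "map abs p"] d inj by blast
  then show "distinct (map (\<lambda>x. nat \<bar>x\<bar>) p)" by (simp add: comp_def)
qed

lemma gg_pair: "x \<noteq> 0 \<Longrightarrow> {gg x ! 0, gg x ! 1} = {2 * nat \<bar>x\<bar> - 1, 2 * nat \<bar>x\<bar>}"
  by (auto simp: gg_def)

lemma pair_inj: "(1::nat) \<le> a \<Longrightarrow> 1 \<le> b \<Longrightarrow> {2*a-1, 2*a} = {2*b-1, 2*b} \<Longrightarrow> a = b"
proof -
  assume a: "1 \<le> a" "1 \<le> b" and e: "{2*a-1, 2*a} = {2*b-1, 2*b}"
  have "2*a \<in> {2*b-1, 2*b}" using e by blast
  then show "a = b" using a by auto
qed

lemma forward:
  assumes sp: "signed_perm n p" and bd: "mset_set dB = black_edges p"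
  shows "hamiltonian (verts n) (compl_configuration dB n)"
proof -
  note F = sp_facts[OF sp]
  define q where "q = unsigned_ext p"
  have lq: "length q = 2*n+2" using F(1) by (simp add: q_def q_len)
  have nz: "\<And>x. x \<in> set p \<Longrightarrow> x \<noteq> 0" using F(3) by fastforce
  have setq: "set q = verts n"
  proof (intro equalityI subsetI)
    fix v assume "v \<in> set q"
    then have "v = 0 \<or> v = 2*n+1 \<or> (\<exists>x\<in>set p. v \<in> set (gg x))"
      using F(1) by (auto simp: q_def unsigned_ext_gg)
    then show "v \<in> verts n"
    proof (elim disjE bexE)
      fix x assume "x \<in> set p" "v \<in> set (gg x)"
      then show ?thesis using F(3)[of x] nz[of x] by (auto simp: set_gg verts_def; linarith)
    qed (auto simp: verts_def)
  next
    fix v assume v: "v \<in> verts n"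
    show "v \<in> set q"
    proof (cases "v = 0 \<or> v = 2*n+1")
      case True then show ?thesis using F(1) by (auto simp: q_def unsigned_ext_gg)
    next
      case False
      define k where "k = (v+1) div 2"
      have "k \<in> {1..n}" using False v by (auto simp: k_def verts_def)
      then obtain x where x: "x \<in> set p" "nat \<bar>x\<bar> = k" using F(2) by (metis imageE)
      have "v \<in> set (gg x)" using x nz[of x] False by (auto simp: set_gg k_def)
      then show ?thesis using x by (auto simp: q_def unsigned_ext_gg)
    qed
  qed
  have dq: "distinct q" by (rule card_distinct) (simp add: setq lq verts_def)
  define f where "f = (\<lambda>i. {q ! i, q ! ((i + 1) mod length q)})"
  have ce: "cedges q = mset (map (\<lambda>j. f (2*j)) [0..<n+1]) + mset (map (\<lambda>j. f (2*j+1)) [0..<n+1])"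
  proof -
    have "cedges q = mset (map f [0..<2*n+2])" unfolding cedges_def f_def by (simp only: lq)
    moreover have "2*(n+1) = 2*n+2" by simp
    ultimately show ?thesis using split_even_odd[of f "n+1"] by metis
  qed
  have ev: "mset (map (\<lambda>j. f (2*j)) [0..<n+1]) = black_edges p"
    unfolding black_edges_def Let_def q_def[symmetric] F(1)
    by (rule arg_cong[where f=mset], rule map_cong) (auto simp: f_def lq)
  define C where "C = grey_edges_compl n"
  define hp where "hp = (\<lambda>k::nat. {2*k-1, 2*k})"
  have od: "map (\<lambda>j. f (2*j+1)) [0..<n+1] = map (hp \<circ> (\<lambda>x. nat \<bar>x\<bar>)) p @ [{2*n+1, 0}]"
  proof -
    have "map (\<lambda>j. f (2*j+1)) [0..<n] = map (\<lambda>j. (hp \<circ> (\<lambda>x. nat \<bar>x\<bar>)) (p!j)) [0..<length p]"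
    proof (rule map_cong)
      fix j assume "j \<in> set [0..<length p]"
      then have j: "j < length p" by simp
      then have "(2*j+2) mod length q = 2*j+2" using lq F(1) by simp
      then have "f (2*j+1) = {q!(2*j+1), q!(2*j+2)}" by (simp add: f_def add.commute)
      also have "\<dots> = {gg (p!j) ! 0, gg (p!j) ! 1}" using q_nth[OF j] by (simp add: q_def)
      also have "\<dots> = hp (nat \<bar>p!j\<bar>)" using gg_pair nz j by (simp add: hp_def)
      finally show "f (2*j+1) = (hp \<circ> (\<lambda>x. nat \<bar>x\<bar>)) (p!j)" by simp
    qed (simp add: F(1))
    also have "\<dots> = map (hp \<circ> (\<lambda>x. nat \<bar>x\<bar>)) p" by (rule nth_equalityI) auto
    finally have a: "map (\<lambda>j. f (2*j+1)) [0..<n] = map (hp \<circ> (\<lambda>x. nat \<bar>x\<bar>)) p" .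
    have b: "f (2*n+1) = {2*n+1, 0}" using q_last[of p] q_first[of p] F(1) lq
      by (simp add: f_def q_def)
    show ?thesis using a b by simp
  qed
  have setod: "set (map (\<lambda>j. f (2*j+1)) [0..<n+1]) = C"
  proof -
    have "set (map (hp \<circ> (\<lambda>x. nat \<bar>x\<bar>)) p) = hp ` {1..n}"
      using F(2) by (simp only: set_map image_comp[symmetric])
    then show ?thesis unfolding od C_def grey_edges_compl_def hp_def by auto
  qed
  have dod: "distinct (map (\<lambda>j. f (2*j+1)) [0..<n+1])"
  proof -
    have "inj_on hp (set (map (\<lambda>x. nat \<bar>x\<bar>) p))"
      by (rule inj_onI) (use F(2) pair_inj in \<open>auto simp: hp_def\<close>)
    then have "distinct (map hp (map (\<lambda>x. nat \<bar>x\<bar>) p))" using F(4) distinct_map[of hp "map (\<lambda>x. nat \<bar>x\<bar>) p"] by blast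
    moreover have "{2*n+1, 0} \<notin> set (map (hp \<circ> (\<lambda>x. nat \<bar>x\<bar>)) p)"
    proof
      assume "{2*n+1, 0} \<in> set (map (hp \<circ> (\<lambda>x. nat \<bar>x\<bar>)) p)"
      then obtain x where x: "x \<in> set p" "{2*n+1, 0} = {2 * nat \<bar>x\<bar> - 1, 2 * nat \<bar>x\<bar>}"
        by (auto simp: hp_def)
      have "(0::nat) \<in> {2 * nat \<bar>x\<bar> - 1, 2 * nat \<bar>x\<bar>}" using x(2) by blast
      then show False using F(3)[OF x(1)] by auto
    qed
    ultimately show ?thesis unfolding od by simp
  qed
  have "cedges q = black_edges p + mset_set C"
    using ce ev mset_set_set[OF dod] setod by simp
  then have "cedges q = compl_configuration dB n"
    using bd by (simp add: compl_configuration_def C_def)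
  then show ?thesis unfolding hamiltonian_cedges using dq setq by auto
qed



lemma pm_unique: "perfect_matching V M \<Longrightarrow> e1 \<in> M \<Longrightarrow> e2 \<in> M \<Longrightarrow> v \<in> e1 \<Longrightarrow> v \<in> e2 \<Longrightarrow> e1 = e2"
  unfolding perfect_matching_def by blast

lemma C_cases: "e \<in> grey_edges_compl n \<Longrightarrow> (\<exists>i. 1 \<le> i \<and> i \<le> n \<and> e = {2*i-1, 2*i}) \<or> e = {0, 2*n+1}"
  unfolding grey_edges_compl_def by blast

lemma C_unique: assumes "e1 \<in> grey_edges_compl n" "e2 \<in> grey_edges_compl n" "v \<in> e1" "v \<in> e2" shows "e1 = e2"
proof -
  have P: "v \<in> {2*i-1, 2*i} \<Longrightarrow> 1 \<le> i \<Longrightarrow> i \<le> n \<Longrightarrow> 1 \<le> v \<and> v \<le> 2*n \<and> i = (v+1) div 2" for i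
  proof -
    assume "v \<in> {2*i-1, 2*i}" "1 \<le> i" "i \<le> n"
    then have "v = 2*i-1 \<or> v = 2*i" by blast
    then show ?thesis using \<open>1 \<le> i\<close> \<open>i \<le> n\<close> by presburger
  qed
  have Q: "v \<in> {0, 2*n+1} \<Longrightarrow> v = 0 \<or> v = 2*n+1" by blast
  from C_cases[OF assms(1)] C_cases[OF assms(2)] show ?thesis
  proof (elim disjE exE conjE)
    fix i j assume i: "1 \<le> i" "i \<le> n" "e1 = {2*i-1, 2*i}" and j: "1 \<le> j" "j \<le> n" "e2 = {2*j-1, 2*j}"
    have "i = j" using P[of i] P[of j] i j assms(3,4) by auto
    then show ?thesis using i j by simp
  next
    fix i assume i: "1 \<le> i" "i \<le> n" "e1 = {2*i-1, 2*i}" and e2: "e2 = {0, 2*n+1}"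
    have "1 \<le> v \<and> v \<le> 2*n" using P[of i] i assms(3) by auto
    moreover have "v = 0 \<or> v = 2*n+1" using e2 assms(4) by blast
    ultimately show ?thesis by linarith
  next
    fix i assume i: "1 \<le> i" "i \<le> n" "e2 = {2*i-1, 2*i}" and e1: "e1 = {0, 2*n+1}"
    have "1 \<le> v \<and> v \<le> 2*n" using P[of i] i assms(4) by auto
    moreover have "v = 0 \<or> v = 2*n+1" using e1 assms(3) by blast
    ultimately show ?thesis by linarith
  qed simp
qed

lemma C_zero: "{0, 2*n+1} \<in> grey_edges_compl n" "e \<in> grey_edges_compl n \<Longrightarrow> 0 \<in> e \<Longrightarrow> e = {0, 2*n+1}"
  unfolding grey_edges_compl_def by auto

lemma C_fin: "finite (grey_edges_compl n)"
proof -
  have "grey_edges_compl n = (\<lambda>i. {2*i-1, 2*i}) ` {1..n} \<union> {{0, 2*n+1}}"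
    unfolding grey_edges_compl_def by auto
  then show ?thesis by simp
qed

lemma dB_fin: "perfect_matching (verts n) dB \<Longrightarrow> finite dB"
  by (rule finite_subset[of _ "Pow (verts n)"]) (auto simp: perfect_matching_def verts_def)

lemma main_back:
  assumes pm: "perfect_matching (verts n) dB" and n1: "n \<ge> 1"
    and dw: "distinct ws" and sw: "set ws = verts n" and w0: "ws!0 = 0" and w1: "ws!1 \<noteq> 2*n+1"
    and ce: "cedges ws \<subseteq># mset_set dB + mset_set (grey_edges_compl n)"
  shows "\<exists>p. signed_perm n p \<and> mset_set dB = black_edges p"
proof -
  define C where "C = grey_edges_compl n"
  define L where "L = length ws"
  have L: "L = 2*n+2" using distinct_card[OF dw] sw by (simp add: L_def verts_def)
  define E where "E = (\<lambda>i. {ws!i, ws!((i+1) mod L)})"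
  have mem: "E i \<in> dB \<or> E i \<in> C" if "i < L" for i
  proof -
    have "E i \<in> (\<lambda>i. {ws!i, ws!((i+1) mod length ws)}) ` {0..<length ws}"
      by (rule image_eqI[where x=i]) (use that in \<open>simp_all add: E_def L_def\<close>)
    then have 1: "E i \<in># cedges ws" unfolding cedges_def by simp
    have "E i \<in># mset_set dB + mset_set C" using mset_subset_eqD[OF ce 1] unfolding C_def .
    then have "E i \<in># mset_set dB \<or> E i \<in># mset_set C" by simp
    then show ?thesis using elem_mset_set[OF dB_fin[OF pm]] elem_mset_set[OF C_fin[of n]] unfolding C_def by blast
  qed
  have ws_eq: "ws!a = ws!b \<longleftrightarrow> a = b" if "a < L" "b < L" for a b
    using nth_eq_iff_index_eq[OF dw] that unfolding L_def by simp
  have E0: "E 0 \<in> dB"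
  proof -
    have "E 0 \<notin> C"
    proof
      assume "E 0 \<in> C"
      moreover have "0 \<in> E 0" using w0 by (simp add: E_def)
      ultimately have "E 0 = {0, 2*n+1}" using C_zero C_def by blast
      moreover have "ws!1 \<noteq> 0" using ws_eq[of 1 0] w0 L by auto
      ultimately show False using w1 L by (auto simp: E_def doubleton_eq_iff)
    qed
    then show ?thesis using mem[of 0] L by auto
  qed
  have ALT: "i < L \<longrightarrow> (even i \<longrightarrow> E i \<in> dB) \<and> (odd i \<longrightarrow> E i \<in> C)" for i
  proof (induction i)
    case 0 then show ?case using E0 by simp
  next
    case (Suc i)
    show ?case
    proof
      assume si: "Suc i < L"
      have ne: "E i \<noteq> E (Suc i)"
      proof
        assume eq: "E i = E (Suc i)"
        have "ws!i \<in> E i" by (simp add: E_def)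
        then have "ws!i \<in> E (Suc i)" using eq by simp
        moreover have "ws!i \<noteq> ws!(Suc i)" using ws_eq[of i "Suc i"] si by simp
        moreover have "ws!i \<noteq> ws!((Suc i + 1) mod L)"
        proof -
          have "(Suc i + 1) mod L \<noteq> i"
          proof (cases "Suc i + 1 < L")
            case True then show ?thesis by simp
          next
            case False then have "Suc i + 1 = L" using si by simp
            then show ?thesis using L n1 by simp
          qed
          then show ?thesis using ws_eq[of i "(Suc i + 1) mod L"] si L by simp
        qed
        ultimately show False by (simp add: E_def)
      qed
      have sh1: "ws!(Suc i) \<in> E i" using si by (simp add: E_def)
      have sh2: "ws!(Suc i) \<in> E (Suc i)" by (simp add: E_def)
      have IH: "(even i \<longrightarrow> E i \<in> dB) \<and> (odd i \<longrightarrow> E i \<in> C)" using Suc si by simp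
      show "(even (Suc i) \<longrightarrow> E (Suc i) \<in> dB) \<and> (odd (Suc i) \<longrightarrow> E (Suc i) \<in> C)"
      proof (cases "even i")
        case True
        then have "E i \<in> dB" using IH by simp
        then have "E (Suc i) \<notin> dB" using pm_unique[OF pm _ _ sh1 sh2] ne by blast
        then show ?thesis using mem[OF si] True by simp
      next
        case False
        then have "E i \<in> C" using IH by simp
        then have "E (Suc i) \<notin> C" using C_unique[OF _ _ sh1 sh2] ne C_def by blast
        then show ?thesis using mem[OF si] False by simp
      qed
    qed
  qed
  have wl: "ws!(2*n+1) = 2*n+1"
  proof -
    have "E (2*n+1) \<in> C" using ALT[of "2*n+1"] L by simp
    moreover have "0 \<in> E (2*n+1)" using w0 L by (simp add: E_def)
    ultimately have "E (2*n+1) = {0, 2*n+1}" using C_zero C_def by blast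
    moreover have "ws!(2*n+1) \<noteq> 0" using ws_eq[of "2*n+1" 0] w0 L by auto
    moreover have "E (2*n+1) = {ws!(2*n+1), 0}" using w0 L by (simp add: E_def)
    ultimately show ?thesis by (auto simp: doubleton_eq_iff)
  qed
  have pair: "\<exists>k. 1 \<le> k \<and> k \<le> n \<and> ((ws!(2*j+1) = 2*k-1 \<and> ws!(2*j+2) = 2*k) \<or> (ws!(2*j+1) = 2*k \<and> ws!(2*j+2) = 2*k-1))"
    if j: "j < n" for j
  proof -
    have "E (2*j+1) \<in> C" using ALT[of "2*j+1"] L j by simp
    moreover have Ee: "E (2*j+1) = {ws!(2*j+1), ws!(2*j+2)}" using L j by (simp add: E_def)
    moreover have "ws!(2*j+1) \<noteq> 0" using ws_eq[of "2*j+1" 0] w0 L j by auto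
    moreover have "ws!(2*j+1) \<noteq> 2*n+1" using ws_eq[of "2*j+1" "2*n+1"] wl L j by auto
    ultimately have "E (2*j+1) \<noteq> {0, 2*n+1}" by (auto simp: doubleton_eq_iff)
    then obtain k where k: "1 \<le> k" "k \<le> n" "{ws!(2*j+1), ws!(2*j+2)} = {2*k-1, 2*k}"
      using \<open>E (2*j+1) \<in> C\<close> Ee unfolding C_def grey_edges_compl_def by blast
    then show ?thesis unfolding doubleton_eq_iff by blast
  qed
  define kk where "kk = (\<lambda>j. (ws!(2*j+1) + 1) div 2)"
  have pair2: "1 \<le> kk j \<and> kk j \<le> n \<and> ((ws!(2*j+1) = 2*kk j-1 \<and> ws!(2*j+2) = 2*kk j \<and> odd (ws!(2*j+1)))
      \<or> (ws!(2*j+1) = 2*kk j \<and> ws!(2*j+2) = 2*kk j-1 \<and> even (ws!(2*j+1))))"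
    if j: "j < n" for j
  proof -
    obtain k where "1 \<le> k \<and> k \<le> n \<and> ((ws!(2*j+1) = 2*k-1 \<and> ws!(2*j+2) = 2*k) \<or> (ws!(2*j+1) = 2*k \<and> ws!(2*j+2) = 2*k-1))"
      using pair[OF j] by blast
    then have k: "1 \<le> k" "k \<le> n" and d: "(ws!(2*j+1) = 2*k-1 \<and> ws!(2*j+2) = 2*k) \<or> (ws!(2*j+1) = 2*k \<and> ws!(2*j+2) = 2*k-1)"
      by auto
    from d show ?thesis
    proof (elim disjE conjE)
      assume a: "ws!(2*j+1) = 2*k-1" "ws!(2*j+2) = 2*k"
      have "kk j = k" unfolding kk_def a(1) using k(1) by presburger
      moreover have "odd (2*k-1)" using k(1) by presburger
      ultimately show ?thesis using a k by simp
    next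
      assume a: "ws!(2*j+1) = 2*k" "ws!(2*j+2) = 2*k-1"
      have "kk j = k" unfolding kk_def a(1) by presburger
      then show ?thesis using a k by simp
    qed
  qed
  have pairset: "{ws!(2*j+1), ws!(2*j+2)} = {2*kk j-1, 2*kk j}" if j: "j < n" for j
  proof -
    from pair2[OF j] have "(ws!(2*j+1) = 2*kk j-1 \<and> ws!(2*j+2) = 2*kk j) \<or> (ws!(2*j+1) = 2*kk j \<and> ws!(2*j+2) = 2*kk j-1)"
      by blast
    then show ?thesis unfolding doubleton_eq_iff by blast
  qed
  have kkb: "1 \<le> kk j \<and> kk j \<le> n" if j: "j < n" for j
    using pair2[OF j] by blast
  define p where "p = map (\<lambda>j. if odd (ws!(2*j+1)) then int (kk j) else - int (kk j)) [0..<n]"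
  have lp: "length p = n" by (simp add: p_def)
  have pj: "p!j = (if odd (ws!(2*j+1)) then int (kk j) else - int (kk j))" if "j < n" for j
    using that by (simp add: p_def)
  have gg_p: "gg (p!j) ! 0 = ws!(2*j+1) \<and> gg (p!j) ! 1 = ws!(2*j+2)" if j: "j < n" for j
    using pair2[OF j] pj[OF j] by (auto simp: gg_def)
  have qw: "unsigned_ext p = ws"
  proof (rule nth_equalityI)
    show "length (unsigned_ext p) = length ws" using q_len[of p] lp L L_def by simp
  next
    fix i assume "i < length (unsigned_ext p)"
    then have i: "i < 2*n+2" using q_len[of p] lp by simp
    show "unsigned_ext p ! i = ws ! i"
    proof (cases "i = 0 \<or> i = 2*n+1")
      case True then show ?thesis using q_first[of p] q_last[of p] lp w0 wl by auto
    next
      case False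
      show ?thesis
      proof (cases "odd i")
        case True
        define j where "j = (i - 1) div 2"
        have "i = 2*j+1" using True unfolding j_def by presburger
        moreover have "j < n" using True False i unfolding j_def by presburger
        ultimately show ?thesis using q_nth(1)[of j p] gg_p[of j] lp by simp
      next
        case ev: False
        define j where "j = (i - 2) div 2"
        have "i = 2*j+2" using ev False unfolding j_def by presburger
        moreover have "j < n" using ev False i unfolding j_def by presburger
        ultimately show ?thesis using q_nth(2)[of j p] gg_p[of j] lp by simp
      qed
    qed
  qed
  have absp: "map abs p = map (\<lambda>j. int (kk j)) [0..<n]"
    by (simp add: p_def)
  have dk: "distinct (map (\<lambda>j. int (kk j)) [0..<n])"
  unfolding distinct_map proof (intro conjI distinct_upt inj_onI)
    fix a b assume a: "a \<in> set [0..<n]" and b: "b \<in> set [0..<n]" and e: "int (kk a) = int (kk b)"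
    have an: "a < n" and bn: "b < n" using a b by auto
    have "ws!(2*a+1) \<in> {ws!(2*b+1), ws!(2*b+2)}"
      using pairset[OF an] pairset[OF bn] e by auto
    then have "2*a+1 = 2*b+1 \<or> 2*a+1 = 2*b+2" using ws_eq[of "2*a+1"] an bn L by auto
    then show "a = b" by presburger
  qed
  have sp: "signed_perm n p"
  proof -
    have sub: "set (map abs p) \<subseteq> {1..int n}" using kkb by (auto simp: absp)
    have "card (set (map abs p)) = n" using dk distinct_card absp by fastforce
    then have "set (map abs p) = {1..int n}"
      using card_subset_eq[OF _ sub] by simp
    then show ?thesis using dk absp lp by (simp add: signed_perm_def)
  qed
  define B where "B = map (\<lambda>i. {ws!(2*i), ws!(2*i+1)}) [0..<n+1]"
  have be: "black_edges p = mset B"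
    unfolding black_edges_def Let_def qw lp B_def by simp
  have dB': "distinct B" unfolding B_def
  unfolding distinct_map proof (intro conjI distinct_upt inj_onI)
    fix a b assume a: "a \<in> set [0..<n+1]" and b: "b \<in> set [0..<n+1]"
      and e: "{ws!(2*a), ws!(2*a+1)} = {ws!(2*b), ws!(2*b+1)}"
    have an: "a < n+1" and bn: "b < n+1" using a b by auto
    have "ws!(2*a) \<in> {ws!(2*b), ws!(2*b+1)}" using e by blast
    then have "2*a = 2*b \<or> 2*a = 2*b+1" using ws_eq[of "2*a"] an bn L by auto
    then show "a = b" by presburger
  qed
  have sB: "set B = dB"
  proof (intro equalityI subsetI)
    fix e assume "e \<in> set B"
    then obtain i where i0: "i \<in> {0..<n+1}" "e = {ws!(2*i), ws!(2*i+1)}"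
      unfolding B_def set_map set_upt by blast
    then have i: "i < n+1" "e = {ws!(2*i), ws!(2*i+1)}" by auto
    then have "e = E (2*i)" using L by (simp add: E_def)
    then show "e \<in> dB" using ALT[of "2*i"] L i by simp
  next
    fix e assume e: "e \<in> dB"
    then have "e \<subseteq> verts n" "card e = 2" using pm by (auto simp: perfect_matching_def)
    then have es: "e \<subseteq> set ws" "e \<noteq> {}" using sw by auto
    then obtain v where v1: "v \<in> e" by blast
    then have v: "v \<in> e" "v \<in> set ws" using es by auto
    then obtain m where m: "m < L" "ws!m = v" by (metis in_set_conv_nth L_def)
    define i where "i = m div 2"
    have il: "i < n+1" using m L by (simp add: i_def)
    have "m = 2*i \<or> m = 2*i+1" unfolding i_def by presburger
    then have "v \<in> {ws!(2*i), ws!(2*i+1)}" using m by auto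
    moreover have "{ws!(2*i), ws!(2*i+1)} \<in> dB" using ALT[of "2*i"] L il by (simp add: E_def)
    ultimately have "e = {ws!(2*i), ws!(2*i+1)}" using pm_unique[OF pm e _ v(1)] by blast
    then have ee: "e = (\<lambda>i. {ws!(2*i), ws!(2*i+1)}) i" by simp
    have "e \<in> (\<lambda>i. {ws!(2*i), ws!(2*i+1)}) ` {0..<n+1}"
      by (rule image_eqI[where x=i]) (use ee il in simp_all)
    then show "e \<in> set B" unfolding B_def set_map set_upt .
  qed
  have "mset_set dB = black_edges p" using be mset_set_set[OF dB'] sB by simp
  then show ?thesis using sp by blast
qed



lemma n0_case: assumes "perfect_matching (verts 0) dB" shows "dB = {{0,1}}"
proof -
  have V: "verts 0 = {0,1}" by (auto simp: verts_def)
  have sub: "e = {0,1}" if "e \<in> dB" for e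
  proof -
    have "e \<subseteq> {0,1}" "card e = 2" using assms that V by (auto simp: perfect_matching_def)
    then show ?thesis by (metis card_2_iff doubleton_eq_iff insert_subset subset_insert zero_neq_one
       card_subset_eq finite.emptyI finite_insert)
  qed
  obtain e where "e \<in> dB" "(0::nat) \<in> e" using assms V by (auto simp: perfect_matching_def)
  then show ?thesis using sub by blast
qed

theorem mainTheorem2:
  fixes n :: nat and dB :: "nat set set"
  assumes "perfect_matching (verts n) dB"
  shows "(\<exists>p. signed_perm n p \<and> configuration dB n = breakpoint_graph p)
         \<longleftrightarrow> hamiltonian (verts n) (compl_configuration dB n)"
proof
  assume "\<exists>p. signed_perm n p \<and> configuration dB n = breakpoint_graph p"
  then obtain p where sp: "signed_perm n p" and eq: "configuration dB n = breakpoint_graph p" by blast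
  have "length p = n" using sp by (simp add: signed_perm_def)
  then have "mset_set dB = black_edges p"
    using eq by (simp add: configuration_def breakpoint_graph_def)
  then show "hamiltonian (verts n) (compl_configuration dB n)" using forward[OF sp] by blast
next
  assume H: "hamiltonian (verts n) (compl_configuration dB n)"
  have red: "\<exists>p. signed_perm n p \<and> mset_set dB = black_edges p \<Longrightarrow>
      \<exists>p. signed_perm n p \<and> configuration dB n = breakpoint_graph p"
    by (auto simp: configuration_def breakpoint_graph_def signed_perm_def)
  show "\<exists>p. signed_perm n p \<and> configuration dB n = breakpoint_graph p"
  proof (cases "n = 0")
    case True
    have "dB = {{0,1}}" using n0_case assms True by simp
    then have "mset_set dB = black_edges []"
      by (simp add: black_edges_def unsigned_ext_def)
    moreover have "signed_perm n []" using True by (simp add: signed_perm_def)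
    ultimately show ?thesis using red by blast
  next
    case False
    then have n1: "n \<ge> 1" by simp
    from H obtain vs where dv: "distinct vs" and sv: "set vs = verts n"
      and cv: "cedges vs \<subseteq># mset_set dB + mset_set (grey_edges_compl n)"
      unfolding hamiltonian_cedges compl_configuration_def by blast
    have lv: "length vs = 2*n+2" using distinct_card[OF dv] sv by (simp add: verts_def)
    have "0 \<in> set vs" using sv by (simp add: verts_def)
    then obtain k where k: "k < length vs" "vs!k = 0" by (metis in_set_conv_nth)
    define ws1 where "ws1 = rotate k vs"
    have d1: "distinct ws1" using dv by (simp add: ws1_def)
    have s1: "set ws1 = verts n" using sv by (simp add: ws1_def)
    have c1: "cedges ws1 \<subseteq># mset_set dB + mset_set (grey_edges_compl n)"
      using cv by (simp add: ws1_def cedges_rotate)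
    have l1: "length ws1 = 2*n+2" using lv by (simp add: ws1_def)
    have w10: "ws1!0 = 0" using k lv by (simp add: ws1_def nth_rotate)
    show ?thesis
    proof (cases "ws1!1 = 2*n+1")
      case False
      then show ?thesis using main_back[OF assms n1 d1 s1 w10 False c1] red by blast
    next
      case True
      define ws where "ws = rotate (length (tl ws1)) (rev ws1)"
      have ne: "ws1 \<noteq> []" using l1 by auto
      then have ws1c: "ws1 = 0 # tl ws1" using w10 by (metis hd_conv_nth list.collapse)
      have "rev ws1 = rev (tl ws1) @ [0]" using ws1c by (metis rev.simps(2))
      then have "ws = rotate (length (rev (tl ws1))) (rev (tl ws1) @ [0])" by (simp only: ws_def length_rev)
      then have wsc: "ws = 0 # rev (tl ws1)" by (simp only: rotate_append) simp
      have d: "distinct ws" using d1 by (simp add: ws_def)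
      have s: "set ws = verts n" using s1 by (simp add: ws_def)
      have c: "cedges ws \<subseteq># mset_set dB + mset_set (grey_edges_compl n)"
        using c1 by (simp add: ws_def cedges_rotate cedges_rev)
      have w0: "ws!0 = 0" using wsc by simp
      have "ws!1 = rev (tl ws1) ! 0" using wsc by simp
      also have "\<dots> = tl ws1 ! (length (tl ws1) - 1)" using l1 by (simp add: rev_nth)
      also have "\<dots> = ws1 ! (2*n+1)" using l1 by (simp add: nth_tl)
      finally have "ws!1 = ws1!(2*n+1)" .
      moreover have "ws1!(2*n+1) \<noteq> ws1!1" using nth_eq_iff_index_eq[OF d1] l1 n1 by simp
      ultimately have w1: "ws!1 \<noteq> 2*n+1" using True by simp
      show ?thesis using main_back[OF assms n1 d s w0 w1 c] red by blast
    qed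
  qed
qed

end
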